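(* Let $q\in\mathcal{X}$ be pathless. Then $E\big(D(q)\big)=B\big(A(q)\big)$ (as elements of $\mathcal{T}[[w]]$).
   Context: Let $\mathbf{k}$ be a commutative ring, $\beta,\alpha\in\mathbf{k}$, $n$ a positive integer; write $[m]=\{1,\dots,m\}$. Let $\mathcal{X}=\mathbf{k}[x_{i,j}\mid 1\le i<j\le n]$ (polynomial ring). A monomial in the $x_{i,j}$ is pathless if there is no triple $1\le i<j<k\le n$ with $x_{i,j}x_{j,k}$ dividing it; a polynomial is pathless if it is a $\mathbf{k}$-linear combination of pathless monomials. Laurent series: for symbols $r_1,\dots,r_n$, a Laurent series over $\mathbf{k}$ is a formal sum $\sum_{a\in\mathbb{Z}^n}\lambda_a r_1^{a_1}\cdots r_n^{a_n}$ ($\lambda_a\in\mathbf{k}$) for which there is $d\in\mathbb{Z}$ with $\lambda_a=0$ whenever some $a_i<d$. Let $\mathcal{Q}$ be the $\mathbf{k}$-algebra of such series with the usual multiplication and coefficientwise (product) topology, $\mathbf{k}$ discrete. For $i\in[n]$ put $q_i=r_ir_{i+1}\cdots r_n$; every Laurent monomial is uniquely of the form $q_1^{a_1}\cdots q_n^{a_n}$, $a\in\mathbb{Z}^n$, so every element of $\mathcal{Q}$ is uniquely an infinite sum $\sum_a\mu_a q_1^{a_1}\cdots q_n^{a_n}$; for $i<j$, $1-q_i/q_j=1-r_i\cdots r_{j-1}$ is invertible. Let $A:\mathcal{X}\to\mathcal{Q}$ be the $\mathbf{k}$-algebra homomorphism with $A(x_{i,j})=-\dfrac{q_i+\beta+\alpha/q_j}{1-q_i/q_j}$.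 Let $\mathcal{T}=\mathbf{k}[[t_1,\dots,t_n]]$ and $\mathcal{T}[[w]]$ the formal power series ring in a further indeterminate $w$ over $\mathcal{T}$ (coefficientwise topology). Let $B:\mathcal{Q}\to\mathcal{T}[[w]]$ be the continuous $\mathbf{k}$-linear map $B\big(\sum_a\mu_a q_1^{a_1}\cdots q_n^{a_n}\big)=\sum_a\mu_a\prod_{i:\,a_i>0}t_i^{a_i}\prod_{i:\,a_i<0}w^{-a_i}$ (convergent since each monomial in $t_1,\dots,t_n,w$ arises from only finitely many $a$); $B$ is in general not multiplicative. Let $\mathcal{T}'=\mathbf{k}[t_1,\dots,t_{n-1}]\subseteq\mathcal{T}$, so $\mathcal{T}'[[w]]\subseteq\mathcal{T}[[w]]$; let $D:\mathcal{X}\to\mathcal{T}'$ be the $\mathbf{k}$-algebra homomorphism with $D(x_{i,j})=t_i$, and $E:\mathcal{T}'\to\mathcal{T}'[[w]]$ the $\mathbf{k}$-algebra homomorphism with $E(t_i)=-\dfrac{t_i+\beta+\alpha w}{1-t_iw}$. *)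

theory Defs
  imports "HOL-Library.Poly_Mapping" "HOL-Library.Product_Lexorder"
begin

(* Polynomial ring X = k[x_{i,j}]: elements of type ((nat \<times> nat) \<Rightarrow>\<^sub>0 nat) \<Rightarrow>\<^sub>0 'k
   (a monomial is an exponent map on the variable indices (i,j)).
   T' = k[t_1..t_{n-1}]: elements of type (nat \<Rightarrow>\<^sub>0 nat) \<Rightarrow>\<^sub>0 'k. *)

definition pathless_mon :: "((nat \<times> nat) \<Rightarrow>\<^sub>0 nat) \<Rightarrow> bool" where
  "pathless_mon m \<longleftrightarrow>
     \<not> (\<exists>i j k. i < j \<and> j < k \<and> Poly_Mapping.lookup m (i,j) > 0 \<and> Poly_Mapping.lookup m (j,k) > 0)"

definition pathless :: "(((nat \<times> nat) \<Rightarrow>\<^sub>0 nat) \<Rightarrow>\<^sub>0 'k::zero) \<Rightarrow> bool" where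
  "pathless q \<longleftrightarrow> (\<forall>m\<in>Poly_Mapping.keys q. pathless_mon m)"

(* ---------- Laurent series Q in r_1..r_n: coefficient function on r-exponent vectors ---------- *)
type_synonym 'a laurent = "(nat \<Rightarrow>\<^sub>0 int) \<Rightarrow> 'a"

definition lmult :: "'a::comm_ring_1 laurent \<Rightarrow> 'a laurent \<Rightarrow> 'a laurent" where
  "lmult f g = (\<lambda>c. \<Sum>a\<in>{a. f a \<noteq> 0 \<and> g (c - a) \<noteq> 0}. f a * g (c - a))"

definition lone :: "'a::comm_ring_1 laurent" where
  "lone = (\<lambda>c. if c = 0 then 1 else 0)"

definition lmon :: "(nat \<Rightarrow>\<^sub>0 int) \<Rightarrow> 'a::comm_ring_1 laurent" where
  "lmon b = (\<lambda>c. if c = b then 1 else 0)"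

primrec lpow :: "'a::comm_ring_1 laurent \<Rightarrow> nat \<Rightarrow> 'a laurent" where
  "lpow f 0 = lone"
| "lpow f (Suc k) = lmult f (lpow f k)"

(* r-exponent vector of q_i = r_i r_{i+1} ... r_n *)
definition qexp :: "nat \<Rightarrow> nat \<Rightarrow> (nat \<Rightarrow>\<^sub>0 int)" where
  "qexp n i = (\<Sum>j\<in>{i..n}. Poly_Mapping.single j 1)"

(* (1 - q_i/q_j)^{-1} = (1 - r_i \<cdots> r_{j-1})^{-1} = \<Sum>_{m\<ge>0} (r_i \<cdots> r_{j-1})^m *)
definition lgeom :: "nat \<Rightarrow> nat \<Rightarrow> 'a::comm_ring_1 laurent" where
  "lgeom i j = (\<lambda>c. if \<exists>m::nat. c = (\<Sum>l\<in>{i..<j}. Poly_Mapping.single l (int m)) then 1 else 0)"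

(* A(x_{i,j}) = -(q_i + \<beta> + \<alpha>/q_j) / (1 - q_i/q_j) *)
definition A_x :: "nat \<Rightarrow> 'a::comm_ring_1 \<Rightarrow> 'a \<Rightarrow> nat \<Rightarrow> nat \<Rightarrow> 'a laurent" where
  "A_x n \<beta> \<alpha> i j =
     lmult (\<lambda>c. - (lmon (qexp n i) c + \<beta> * lone c + \<alpha> * lmon (- qexp n j) c)) (lgeom i j)"

definition A_mon :: "nat \<Rightarrow> 'a::comm_ring_1 \<Rightarrow> 'a \<Rightarrow> ((nat \<times> nat) \<Rightarrow>\<^sub>0 nat) \<Rightarrow> 'a laurent" where
  "A_mon n \<beta> \<alpha> m =
     foldr (\<lambda>v acc. lmult (lpow (A_x n \<beta> \<alpha> (fst v) (snd v)) (Poly_Mapping.lookup m v)) acc)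
           (sorted_list_of_set (Poly_Mapping.keys m)) lone"

definition A_map :: "nat \<Rightarrow> 'a::comm_ring_1 \<Rightarrow> 'a \<Rightarrow> (((nat \<times> nat) \<Rightarrow>\<^sub>0 nat) \<Rightarrow>\<^sub>0 'a) \<Rightarrow> 'a laurent" where
  "A_map n \<beta> \<alpha> q = (\<lambda>c. \<Sum>m\<in>Poly_Mapping.keys q. Poly_Mapping.lookup q m * A_mon n \<beta> \<alpha> m c)"

(* ---------- T[[w]] = k[[t_1..t_n]][[w]]: coefficient function on (t-exponent, w-exponent) ---------- *)
type_synonym 'a tw = "(nat \<Rightarrow>\<^sub>0 nat) \<times> nat \<Rightarrow> 'a"

(* r-exponent vector of q_1^{a_1} \<cdots> q_n^{a_n} *)
definition q_to_r :: "nat \<Rightarrow> (nat \<Rightarrow>\<^sub>0 int) \<Rightarrow> (nat \<Rightarrow>\<^sub>0 int)" where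
  "q_to_r n a = (\<Sum>i\<in>{1..n}. \<Sum>j\<in>{i..n}. Poly_Mapping.single j (Poly_Mapping.lookup a i))"

(* B(\<Sum>_a \<mu>_a q^a) = \<Sum>_a \<mu>_a \<Prod>_{a_i>0} t_i^{a_i} \<Prod>_{a_i<0} w^{-a_i} *)
definition B_map :: "nat \<Rightarrow> 'a::comm_ring_1 laurent \<Rightarrow> 'a tw" where
  "B_map n f = (\<lambda>(e,k). \<Sum>a\<in>{a. Poly_Mapping.keys a \<subseteq> {1..n} \<and> (\<forall>i. max (Poly_Mapping.lookup a i) 0 = int (Poly_Mapping.lookup e i))
                                  \<and> (\<Sum>i\<in>{1..n}. nat (- Poly_Mapping.lookup a i)) = k}. f (q_to_r n a))"

definition pmult :: "'a::comm_ring_1 tw \<Rightarrow> 'a tw \<Rightarrow> 'a tw" where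
  "pmult f g = (\<lambda>(e,k). \<Sum>p\<in>{(e1,k1). (\<forall>i. Poly_Mapping.lookup e1 i \<le> Poly_Mapping.lookup e i) \<and> k1 \<le> k}.
                          f p * g (e - fst p, k - snd p))"

definition pone :: "'a::comm_ring_1 tw" where
  "pone = (\<lambda>(e,k). if e = 0 \<and> k = 0 then 1 else 0)"

primrec ppow :: "'a::comm_ring_1 tw \<Rightarrow> nat \<Rightarrow> 'a tw" where
  "ppow f 0 = pone"
| "ppow f (Suc k) = pmult f (ppow f k)"

(* E(t_i) = -(t_i + \<beta> + \<alpha> w) / (1 - t_i w), with (1 - t_i w)^{-1} = \<Sum>_m t_i^m w^m *)
definition E_t :: "'a::comm_ring_1 \<Rightarrow> 'a \<Rightarrow> nat \<Rightarrow> 'a tw" where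
  "E_t \<beta> \<alpha> i =
     pmult (\<lambda>(e,k). - ((if e = Poly_Mapping.single i 1 \<and> k = 0 then 1 else 0)
                        + (if e = 0 \<and> k = 0 then \<beta> else 0)
                        + (if e = 0 \<and> k = 1 then \<alpha> else 0)))
           (\<lambda>(e,k). if e = Poly_Mapping.single i k then 1 else 0)"

definition E_mon :: "'a::comm_ring_1 \<Rightarrow> 'a \<Rightarrow> (nat \<Rightarrow>\<^sub>0 nat) \<Rightarrow> 'a tw" where
  "E_mon \<beta> \<alpha> e =
     foldr (\<lambda>i acc. pmult (ppow (E_t \<beta> \<alpha> i) (Poly_Mapping.lookup e i)) acc) (sorted_list_of_set (Poly_Mapping.keys e)) pone"

definition E_map :: "'a::comm_ring_1 \<Rightarrow> 'a \<Rightarrow> ((nat \<Rightarrow>\<^sub>0 nat) \<Rightarrow>\<^sub>0 'a) \<Rightarrow> 'a tw" where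
  "E_map \<beta> \<alpha> p = (\<lambda>x. \<Sum>e\<in>Poly_Mapping.keys p. Poly_Mapping.lookup p e * E_mon \<beta> \<alpha> e x)"

(* the k-algebra homomorphism D : X \<rightarrow> T', x_{i,j} \<mapsto> t_i *)
definition D_map :: "(((nat \<times> nat) \<Rightarrow>\<^sub>0 nat) \<Rightarrow>\<^sub>0 'a::comm_ring_1) \<Rightarrow> ((nat \<Rightarrow>\<^sub>0 nat) \<Rightarrow>\<^sub>0 'a)" where
  "D_map q = (\<Sum>m\<in>Poly_Mapping.keys q.
     Poly_Mapping.single (\<Sum>v\<in>Poly_Mapping.keys m. Poly_Mapping.single (fst v) (Poly_Mapping.lookup m v)) (Poly_Mapping.lookup q m))"

end

theory Submission
  imports Defs "HOL-Library.Product_Plus"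
begin


abbreviation lk where "lk \<equiv> Poly_Mapping.lookup"
abbreviation ks where "ks \<equiv> Poly_Mapping.keys"

lemma finite_pm_int_bounded:
  assumes "finite K"
  shows "finite {a::'a \<Rightarrow>\<^sub>0 int. ks a \<subseteq> K \<and> (\<forall>i. \<bar>lk a i\<bar> \<le> (N::int))}"
proof -
  let ?S = "{a::'a \<Rightarrow>\<^sub>0 int. ks a \<subseteq> K \<and> (\<forall>i. \<bar>lk a i\<bar> \<le> N)}"
  have "lk ` ?S \<subseteq> {f. \<forall>x. (x\<in>K \<longrightarrow> f x \<in> {-N..N}) \<and> (x\<notin>K \<longrightarrow> f x = 0)}"
    by (auto simp: in_keys_iff abs_le_iff minus_le_iff)
  moreover have "finite {f. \<forall>x. (x\<in>K \<longrightarrow> f x \<in> {-N..N}) \<and> (x\<notin>K \<longrightarrow> f x = (0::int))}"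
    by (rule finite_set_of_finite_funs) (use assms in auto)
  ultimately have "finite (lk ` ?S)" by (rule finite_subset)
  then show ?thesis by (rule finite_imageD) (simp add: inj_on_def)
qed

lemma finite_pm_nat_bounded:
  assumes "finite K"
  shows "finite {a::'a \<Rightarrow>\<^sub>0 nat. ks a \<subseteq> K \<and> (\<forall>i. lk a i \<le> (N::nat))}"
proof -
  let ?S = "{a::'a \<Rightarrow>\<^sub>0 nat. ks a \<subseteq> K \<and> (\<forall>i. lk a i \<le> N)}"
  have "lk ` ?S \<subseteq> {f. \<forall>x. (x\<in>K \<longrightarrow> f x \<in> {0..N}) \<and> (x\<notin>K \<longrightarrow> f x = 0)}"
    by (auto simp: in_keys_iff)
  moreover have "finite {f. \<forall>x. (x\<in>K \<longrightarrow> f x \<in> {0..N}) \<and> (x\<notin>K \<longrightarrow> f x = (0::nat))}"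
    by (rule finite_set_of_finite_funs) (use assms in auto)
  ultimately have "finite (lk ` ?S)" by (rule finite_subset)
  then show ?thesis by (rule finite_imageD) (simp add: inj_on_def)
qed

definition le2 :: "(nat \<Rightarrow>\<^sub>0 nat) \<times> nat \<Rightarrow> (nat \<Rightarrow>\<^sub>0 nat) \<times> nat \<Rightarrow> bool" where
  "le2 p x \<longleftrightarrow> (\<forall>i. lk (fst p) i \<le> lk (fst x) i) \<and> snd p \<le> snd x"

definition Down :: "(nat \<Rightarrow>\<^sub>0 nat) \<times> nat \<Rightarrow> ((nat \<Rightarrow>\<^sub>0 nat) \<times> nat) set" where
  "Down x = {p. le2 p x}"

lemma finite_Down: "finite (Down x)"
proof -
  have "Down x \<subseteq> {a. ks a \<subseteq> ks (fst x) \<and> (\<forall>i. lk a i \<le> Max (insert 0 (lk (fst x) ` ks (fst x))))} \<times> {..snd x}"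
  proof
    fix p assume "p \<in> Down x"
    then have h: "\<And>i. lk (fst p) i \<le> lk (fst x) i" "snd p \<le> snd x" by (auto simp: Down_def le2_def)
    have "ks (fst p) \<subseteq> ks (fst x)" using h(1) by (auto simp: in_keys_iff) (meson less_le_trans)
    moreover have "lk (fst p) i \<le> Max (insert 0 (lk (fst x) ` ks (fst x)))" for i
    proof (cases "i \<in> ks (fst x)")
      case True then show ?thesis using h(1)[of i] by (meson Max_ge finite_imageI finite_insert finite_keys image_eqI insertI2 le_trans)
    next
      case False then show ?thesis using h(1)[of i] by (simp add: in_keys_iff)
    qed
    ultimately show "p \<in> {a. ks a \<subseteq> ks (fst x) \<and> (\<forall>i. lk a i \<le> Max (insert 0 (lk (fst x) ` ks (fst x))))} \<times> {..snd x}"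
      using h(2) by (cases p) auto
  qed
  moreover have "finite ({a. ks a \<subseteq> ks (fst x) \<and> (\<forall>i. lk a i \<le> Max (insert 0 (lk (fst x) ` ks (fst x))))} \<times> {..snd x})"
    by (intro finite_cartesian_product finite_pm_nat_bounded) auto
  ultimately show ?thesis by (rule finite_subset)
qed

lemma pmult_eq: "pmult f g x = (\<Sum>p\<in>Down x. f p * g (x - p))"
  by (cases x) (simp add: pmult_def Down_def le2_def case_prod_unfold minus_prod_def)

lemma le2_diff_add: "le2 p x \<Longrightarrow> p + (x - p) = x"
  by (cases p, cases x) (auto simp: le2_def intro!: poly_mapping_eqI simp: lookup_add lookup_minus)

lemma le2_diff: "le2 p x \<Longrightarrow> le2 (x - p) x"
  by (auto simp: le2_def lookup_minus)

lemma le2_diff_diff: "le2 p x \<Longrightarrow> x - (x - p) = p"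
  by (cases p, cases x) (auto simp: le2_def intro!: poly_mapping_eqI simp: lookup_minus)

lemma le2_add: "le2 (p + q) x \<longleftrightarrow> le2 p x \<and> le2 q (x - p) \<and> le2 p x" 
  by (auto simp: le2_def lookup_minus lookup_add) (metis add.commute le_diff_conv2 le_add2 le_trans)+

lemma diff_add2: "le2 (p + q) x \<Longrightarrow> x - (p + q) = x - p - q"
  by (cases p, cases q, cases x) (auto simp: le2_def intro!: poly_mapping_eqI simp: lookup_minus lookup_add)

lemma add_diff2: "q + p - p = (q::(nat \<Rightarrow>\<^sub>0 nat) \<times> nat)"
  by simp

lemma pmult_comm: "pmult f g = pmult g f"
proof
  fix x
  show "pmult f g x = pmult g f x"
    unfolding pmult_eq
    by (rule sum.reindex_bij_witness[where i="\<lambda>p. x - p" and j="\<lambda>p. x - p"])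
       (auto simp: Down_def le2_diff le2_diff_diff mult.commute)
qed

lemma pone_eq: "pone p = (if p = 0 then 1 else 0)"
  by (cases p) (simp add: pone_def zero_prod_def)

lemma pmult_pone: "pmult pone f = f"
proof
  fix x
  have "pmult pone f x = (\<Sum>p\<in>Down x. if p = 0 then f (x - p) else 0)"
    unfolding pmult_eq pone_eq by (rule sum.cong) auto
  also have "\<dots> = f x"
    apply (subst sum.delta[OF finite_Down]) by (auto simp: Down_def le2_def)
  finally show "pmult pone f x = f x" .
qed

lemma natd: "c \<le> a \<Longrightarrow> a \<le> b \<Longrightarrow> b - c - (a - c) = b - (a::nat)" by arith

lemma diff_sub2': fixes x :: "(nat \<Rightarrow>\<^sub>0 nat) \<times> nat" assumes "\<forall>i. lk a i \<le> lk (fst x) i" "b \<le> snd x" "\<forall>i. lk aa i \<le> lk a i" "ba \<le> b"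
  shows "x - (aa,ba) - (a - aa, b - ba) = x - (a,b)"
proof -
  obtain ab bb where x: "x = (ab,bb)" by (cases x)
  have "ab - aa - (a - aa) = ab - a"
  proof (rule poly_mapping_eqI)
    fix k
    have "lk ab k - lk aa k - (lk a k - lk aa k) = lk ab k - lk a k"
      by (rule natd) (use assms x in auto)
    then show "lk (ab - aa - (a - aa)) k = lk (ab - a) k" by (simp add: lookup_minus)
  qed
  moreover have "bb - ba - (b - ba) = bb - b" by (rule natd) (use assms x in auto)
  ultimately show ?thesis by (simp add: x)
qed

lemma pmult_assoc: "pmult (pmult f g) h = pmult f (pmult g h)"
proof
  fix x
  have "pmult (pmult f g) h x = (\<Sum>p\<in>Down x. (\<Sum>p1\<in>Down p. f p1 * g (p - p1)) * h (x - p))"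
    by (simp add: pmult_eq)
  also have "\<dots> = (\<Sum>(p,p1)\<in>(SIGMA p:Down x. Down p). f p1 * g (p - p1) * h (x - p))"
    by (simp add: sum_distrib_right sum.Sigma finite_Down)
  also have "\<dots> = (\<Sum>(p1,p2)\<in>(SIGMA p1:Down x. Down (x - p1)). f p1 * (g p2 * h (x - p1 - p2)))"
    apply (rule sum.reindex_bij_witness[where i="\<lambda>(p1,p2). (p1 + p2, p1)" and j="\<lambda>(p,p1). (p1, p - p1)"])
    apply (auto simp: Down_def le2_def lookup_minus lookup_add diff_sub2' mult.assoc intro!: poly_mapping_eqI)
    apply (meson le_trans)
    apply (simp add: diff_le_mono)
    apply (simp add: le_diff_conv2 add.commute)
    done
  also have "\<dots> = (\<Sum>p1\<in>Down x. f p1 * (\<Sum>p2\<in>Down (x - p1). g p2 * h (x - p1 - p2)))"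
    by (simp add: sum_distrib_left sum.Sigma finite_Down)
  also have "\<dots> = pmult f (pmult g h) x"
    by (simp add: pmult_eq)
  finally show "pmult (pmult f g) h x = pmult f (pmult g h) x" .
qed




lemma ppow_add: "ppow f (a + b) = pmult (ppow f a) (ppow f b)"
  by (induction a) (simp_all add: pmult_pone pmult_assoc)

interpretation pm: comm_monoid pmult pone
  apply unfold_locales
    apply (rule pmult_assoc)
   apply (rule pmult_comm)
  apply (metis pmult_comm pmult_pone)
  done

interpretation pm: comm_monoid_set pmult pone ..

lemma foldr_pm: "distinct xs \<Longrightarrow> foldr (\<lambda>v acc. pmult (P v) acc) xs pone = pm.F P (set xs)"
  by (induction xs) (simp_all add: pm.insert)

lemma ppow_sum: "finite S \<Longrightarrow> ppow f (sum c S) = pm.F (\<lambda>v. ppow f (c v)) S"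
  by (induction S rule: finite_induct) (simp_all add: ppow_add pm.insert)

lemma lookup_qtr: "lk (q_to_r n a) j = (if 1 \<le> j \<and> j \<le> n then (\<Sum>i\<in>{1..j}. lk a i) else 0)"
proof -
  have "lk (q_to_r n a) j = (\<Sum>i\<in>{1..n}. if j \<in> {i..n} then lk a i else 0)"
    unfolding q_to_r_def lookup_sum lookup_single
    by (rule sum.cong) (auto simp: when_def)
  also have "\<dots> = (\<Sum>i\<in>{i\<in>{1..n}. j \<in> {i..n}}. lk a i)"
    by (simp only: sum.inter_filter[OF finite_atLeastAtMost])
  also have "\<dots> = (if 1 \<le> j \<and> j \<le> n then (\<Sum>i\<in>{1..j}. lk a i) else 0)"
  proof (cases "1 \<le> j \<and> j \<le> n")
    case True
    then have e: "{i\<in>{1..n}. j \<in> {i..n}} = {1..j}" by auto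
    show ?thesis unfolding e using True by simp
  next
    case False
    then have e: "{i\<in>{1..n}. j \<in> {i..n}} = {}" by auto
    show ?thesis unfolding e using False by auto
  qed
  finally show ?thesis .
qed

lemma qtr_add: "q_to_r n (a + b) = q_to_r n a + q_to_r n b"
  by (rule poly_mapping_eqI) (simp add: lookup_qtr lookup_add sum.distrib)

lemma qtr_diff: "q_to_r n (a - b) = q_to_r n a - q_to_r n b"
  by (rule poly_mapping_eqI) (simp add: lookup_qtr lookup_minus sum_subtractf)

lemma qtr_uminus: "q_to_r n (- a) = - q_to_r n a"
  by (rule poly_mapping_eqI) (simp add: lookup_qtr sum_negf)

lemma qtr_zero: "q_to_r n 0 = 0"
  by (rule poly_mapping_eqI) (simp add: lookup_qtr)

lemma qtr_eq0:
  assumes "ks c \<subseteq> {1..n}" "q_to_r n c = 0"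
  shows "c = 0"
proof -
  have S: "(\<Sum>i\<in>{1..j}. lk c i) = 0" if "j \<le> n" for j
  proof (cases "j = 0")
    case True then show ?thesis by simp
  next
    case False
    then have "lk (q_to_r n c) j = (\<Sum>i\<in>{1..j}. lk c i)" using that by (simp add: lookup_qtr)
    then show ?thesis using assms(2) by simp
  qed
  show ?thesis
  proof (rule poly_mapping_eqI)
    fix j
    show "lk c j = lk 0 j"
    proof (cases "j \<in> {1..n}")
      case True
      then obtain j' where j': "j = Suc j'" by (cases j) auto
      have "(\<Sum>i\<in>{1..Suc j'}. lk c i) = (\<Sum>i\<in>{1..j'}. lk c i) + lk c (Suc j')"
        by simp
      with S[of j] S[of j'] True j' show ?thesis by simp
    next
      case False
      then show ?thesis using assms(1) by (auto simp: in_keys_iff)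
    qed
  qed
qed

lemma qtr_inj:
  assumes "ks a \<subseteq> {1..n}" "ks b \<subseteq> {1..n}" "q_to_r n a = q_to_r n b"
  shows "a = b"
proof -
  have "ks (a - b) \<subseteq> {1..n}" using assms(1,2) keys_diff[of a b] by auto
  moreover have "q_to_r n (a - b) = 0" using assms(3) by (simp add: qtr_diff)
  ultimately have "a - b = 0" by (rule qtr_eq0)
  then show ?thesis by simp
qed

lemma qtr_single: "1 \<le> i \<Longrightarrow> i \<le> n \<Longrightarrow> q_to_r n (Poly_Mapping.single i m) = (\<Sum>l\<in>{i..n}. Poly_Mapping.single l m)"
  by (rule poly_mapping_eqI) (auto simp: lookup_qtr lookup_sum lookup_single when_def)




definition Cone :: "nat set \<Rightarrow> nat set \<Rightarrow> (nat \<Rightarrow>\<^sub>0 int) set" where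
  "Cone L R = {a. \<forall>i. (i \<in> L \<longrightarrow> 0 \<le> lk a i) \<and> (i \<in> R \<longrightarrow> lk a i \<le> 0) \<and> (i \<notin> L \<and> i \<notin> R \<longrightarrow> lk a i = 0)}"

definition posp :: "(nat \<Rightarrow>\<^sub>0 int) \<Rightarrow> (nat \<Rightarrow>\<^sub>0 nat)" where
  "posp a = Poly_Mapping.map nat a"

lemma lookup_posp: "lk (posp a) i = nat (lk a i)"
  by (simp add: posp_def map.rep_eq when_def)

locale cone_ctx =
  fixes n :: nat and L R :: "nat set"
  assumes disj: "L \<inter> R = {}" and sub: "L \<union> R \<subseteq> {1..n}"
begin

definition negs :: "(nat \<Rightarrow>\<^sub>0 int) \<Rightarrow> nat" where
  "negs a = (\<Sum>i\<in>{1..n}. nat (- lk a i))"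

definition rho :: "(nat \<Rightarrow>\<^sub>0 int) \<Rightarrow> (nat \<Rightarrow>\<^sub>0 nat) \<times> nat" where
  "rho a = (posp a, negs a)"

abbreviation C where "C \<equiv> Cone L R"

definition csupp :: "'a::comm_ring_1 laurent \<Rightarrow> bool" where
  "csupp f \<longleftrightarrow> (\<forall>c. f c \<noteq> 0 \<longrightarrow> c \<in> q_to_r n ` C)"

lemma finLR: "finite (L \<union> R)"
  using sub by (rule finite_subset) simp

lemma Cone_keys: "a \<in> C \<Longrightarrow> ks a \<subseteq> L \<union> R"
  by (auto simp: Cone_def in_keys_iff)

lemma Cone_keys': "a \<in> C \<Longrightarrow> ks a \<subseteq> {1..n}"
  using Cone_keys sub by blast

lemma Cone_add: "a \<in> C \<Longrightarrow> b \<in> C \<Longrightarrow> a + b \<in> C"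
  unfolding Cone_def by (auto simp: lookup_add intro!: add_nonneg_nonneg add_nonpos_nonpos)

lemma Cone_zero: "0 \<in> C"
  by (auto simp: Cone_def)

lemma qtr_inj_C: "a \<in> C \<Longrightarrow> ks b \<subseteq> {1..n} \<Longrightarrow> q_to_r n b = q_to_r n a \<Longrightarrow> b = a"
  using qtr_inj Cone_keys' by blast

lemma rho_add: "a \<in> C \<Longrightarrow> b \<in> C \<Longrightarrow> rho (a + b) = rho a + rho b"
proof -
  assume a: "a \<in> C" and b: "b \<in> C"
  have s: "nat (x + y) = nat x + nat y \<and> nat (- (x + y)) = nat (-x) + nat (-y)"
    if "(0 \<le> x \<and> 0 \<le> y) \<or> (x \<le> 0 \<and> y \<le> 0)" for x y :: int
    using that by auto
  have *: "nat (lk a i + lk b i) = nat (lk a i) + nat (lk b i) \<and>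
           nat (- (lk a i + lk b i)) = nat (- lk a i) + nat (- lk b i)" for i
    apply (rule s)
    using a b disj by (auto simp: Cone_def) (metis order.refl)+
  have **: "nat (- lk a i - lk b i) = nat (- lk a i) + nat (- lk b i)" for i
    using *[of i] by simp
  show ?thesis
    unfolding rho_def negs_def
    by (auto intro!: poly_mapping_eqI simp: lookup_posp lookup_add * ** sum.distrib)
qed

lemma Dc_finite: "finite {a\<in>C. c - a \<in> C}"
proof -
  let ?N = "(\<Sum>i\<in>L \<union> R. \<bar>lk c i\<bar>)"
  have "{a\<in>C. c - a \<in> C} \<subseteq> {a. ks a \<subseteq> L \<union> R \<and> (\<forall>i. \<bar>lk a i\<bar> \<le> ?N)}"
  proof
    fix a assume "a \<in> {a\<in>C. c - a \<in> C}"
    then have a: "a \<in> C" "c - a \<in> C" by auto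
    have "\<bar>lk a i\<bar> \<le> ?N" for i
    proof -
    have "\<bar>lk a i\<bar> \<le> \<bar>lk c i\<bar>"
      using a unfolding Cone_def by (auto simp: lookup_minus) (smt (verit))+
    moreover have "\<bar>lk c i\<bar> \<le> ?N" if "i \<in> L \<union> R"
      using that finLR by (intro member_le_sum) auto
    moreover have "lk a i = 0" if "i \<notin> L \<union> R" using a that unfolding Cone_def by auto
    ultimately show "\<bar>lk a i\<bar> \<le> ?N"
      by (cases "i \<in> L \<union> R") (auto intro: sum_nonneg)
    qed
    then show "a \<in> {a. ks a \<subseteq> L \<union> R \<and> (\<forall>i. \<bar>lk a i\<bar> \<le> ?N)}"
      using Cone_keys[OF a(1)] by auto
  qed
  then show ?thesis using finite_pm_int_bounded[OF finLR] by (rule finite_subset)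
qed

definition Bset :: "(nat \<Rightarrow>\<^sub>0 nat) \<Rightarrow> nat \<Rightarrow> (nat \<Rightarrow>\<^sub>0 int) set" where
  "Bset e k = {a. ks a \<subseteq> {1..n} \<and> (\<forall>i. max (lk a i) 0 = int (lk e i))
                                  \<and> (\<Sum>i\<in>{1..n}. nat (- lk a i)) = k}"

lemma B_map_Bset: "B_map n f (e,k) = (\<Sum>a\<in>Bset e k. f (q_to_r n a))"
  by (simp add: B_map_def Bset_def)

lemma Bset_finite: "finite (Bset e k)"
proof -
  let ?N = "int k + int (sum (lk e) (ks e))"
  have "Bset e k \<subseteq> {a. ks a \<subseteq> {1..n} \<and> (\<forall>i. \<bar>lk a i\<bar> \<le> ?N)}"
  proof
    fix a assume "a \<in> Bset e k"
    then have a: "ks a \<subseteq> {1..n}" "\<And>i. max (lk a i) 0 = int (lk e i)"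
      "(\<Sum>i\<in>{1..n}. nat (- lk a i)) = k" by (auto simp: Bset_def)
    have "\<bar>lk a i\<bar> \<le> ?N" for i
    proof (cases "i \<in> {1..n}")
      case False
      then have "lk a i = 0" using a(1) by (auto simp: in_keys_iff)
      then show ?thesis by (simp add: add_nonneg_nonneg sum_nonneg)
    next
      case True
      have e1: "lk e i \<le> sum (lk e) (ks e)"
        by (cases "i \<in> ks e") (auto intro: member_le_sum simp: in_keys_iff)
      have e2: "nat (- lk a i) \<le> k"
        using True a(3) by (metis finite_atLeastAtMost member_le_sum zero_le)
      show ?thesis
      proof (cases "0 \<le> lk a i")
        case True
        then have "lk a i = int (lk e i)" using a(2)[of i] by simp
        moreover have "int (lk e i) \<le> int (sum (lk e) (ks e))" using e1 by (simp only: of_nat_le_iff)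
        ultimately show ?thesis using True by linarith
      next
        case False
        have "0 \<le> int (sum (lk e) (ks e))" by (rule of_nat_0_le_iff)
        then show ?thesis using e2 False by linarith
      qed
    qed
    then show "a \<in> {a. ks a \<subseteq> {1..n} \<and> (\<forall>i. \<bar>lk a i\<bar> \<le> ?N)}" using a(1) by auto
  qed
  then show ?thesis using finite_pm_int_bounded[of "{1..n}"] by (rule finite_subset) simp
qed

definition Fib :: "(nat \<Rightarrow>\<^sub>0 nat) \<times> nat \<Rightarrow> (nat \<Rightarrow>\<^sub>0 int) set" where
  "Fib x = {a\<in>C. rho a = x}"

lemma Fib_sub: "Fib (e,k) \<subseteq> Bset e k"
proof
  fix a assume "a \<in> Fib (e,k)"
  then have a: "a \<in> C" "posp a = e" "negs a = k" by (auto simp: Fib_def rho_def)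
  show "a \<in> Bset e k"
    using Cone_keys'[OF a(1)] a(2,3) by (auto simp: Bset_def negs_def lookup_posp max_def)
qed

lemma Fib_finite: "finite (Fib x)"
  using Fib_sub[of "fst x" "snd x"] Bset_finite by (metis prod.collapse finite_subset)

lemma B_cone:
  assumes "csupp f"
  shows "B_map n f x = (\<Sum>a\<in>Fib x. f (q_to_r n a))"
proof (cases x)
  case (Pair e k)
  have "B_map n f (e,k) = (\<Sum>a\<in>Fib (e,k). f (q_to_r n a))"
    unfolding B_map_Bset
  proof (rule sum.mono_neutral_right[OF Bset_finite Fib_sub], rule ballI)
    fix a assume a: "a \<in> Bset e k - Fib (e,k)"
    show "f (q_to_r n a) = 0"
    proof (rule ccontr)
      assume "f (q_to_r n a) \<noteq> 0"
      then obtain b where b: "b \<in> C" "q_to_r n a = q_to_r n b" using assms by (auto simp: csupp_def)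
      have "a = b" using qtr_inj_C[OF b(1) _ b(2)] a by (auto simp: Bset_def)
      then have "a \<in> C" using b by simp
      moreover have "posp a = e"
      proof (rule poly_mapping_eqI)
        fix i
        have "max (lk a i) 0 = int (lk e i)" using a by (auto simp: Bset_def)
        then have "nat (lk a i) = lk e i" by (simp add: max_def split: if_splits)
        then show "lk (posp a) i = lk e i" by (simp add: lookup_posp)
      qed
      ultimately have "a \<in> Fib (e,k)" using a by (auto simp: Fib_def rho_def negs_def Bset_def)
      then show False using a by simp
    qed
  qed
  then show ?thesis using Pair by simp
qed

lemma le2_add_self: "le2 p (p + q)"
  by (auto simp: le2_def lookup_add)

lemma lmult_cone:
  assumes f: "csupp f" and g: "csupp g" and c: "c \<in> C"
  shows "lmult f g (q_to_r n c) = (\<Sum>a\<in>{a\<in>C. c - a \<in> C}. f (q_to_r n a) * g (q_to_r n (c - a)))"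
proof -
  let ?X = "{x. f x \<noteq> 0 \<and> g (q_to_r n c - x) \<noteq> 0}"
  let ?Y = "{a\<in>{a\<in>C. c - a \<in> C}. f (q_to_r n a) * g (q_to_r n (c - a)) \<noteq> 0}"
  let ?Y' = "{a\<in>C. c - a \<in> C \<and> f (q_to_r n a) \<noteq> 0 \<and> g (q_to_r n (c - a)) \<noteq> 0}"
  have XY: "?X = q_to_r n ` ?Y'"
  proof
    show "?X \<subseteq> q_to_r n ` ?Y'"
    proof
      fix x assume x: "x \<in> ?X"
      then obtain a where a: "a \<in> C" "x = q_to_r n a" using f by (auto simp: csupp_def)
      obtain b where b: "b \<in> C" "q_to_r n c - x = q_to_r n b" using g x by (auto simp: csupp_def)
      have "ks (c - a) \<subseteq> {1..n}" using Cone_keys'[OF c] Cone_keys'[OF a(1)] keys_diff[of c a] by auto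
      moreover have "q_to_r n (c - a) = q_to_r n b" using a b by (simp add: qtr_diff)
      ultimately have "c - a = b" using qtr_inj_C[OF b(1)] by blast
      then show "x \<in> q_to_r n ` ?Y'" using a b x by (auto simp: qtr_diff)
    qed
    show "q_to_r n ` ?Y' \<subseteq> ?X" by (auto simp: qtr_diff)
  qed
  have inj: "inj_on (q_to_r n) ?Y'"
    by (rule inj_onI) (metis (no_types, lifting) mem_Collect_eq Cone_keys' qtr_inj)
  have "lmult f g (q_to_r n c) = (\<Sum>x\<in>?X. f x * g (q_to_r n c - x))"
    by (simp add: lmult_def)
  also have "\<dots> = (\<Sum>a\<in>?Y'. f (q_to_r n a) * g (q_to_r n (c - a)))"
    unfolding XY by (subst sum.reindex[OF inj]) (simp add: qtr_diff)
  also have "\<dots> = (\<Sum>a\<in>{a\<in>C. c - a \<in> C}. f (q_to_r n a) * g (q_to_r n (c - a)))"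
    by (rule sum.mono_neutral_left[OF Dc_finite]) auto
  finally show ?thesis .
qed

lemma lmult_out:
  assumes f: "csupp f" and g: "csupp g" and x: "x \<notin> q_to_r n ` C"
  shows "lmult f g x = 0"
proof -
  have E: "{y. f y \<noteq> 0 \<and> g (x - y) \<noteq> 0} = {}"
  proof (rule ccontr)
    assume "{y. f y \<noteq> 0 \<and> g (x - y) \<noteq> 0} \<noteq> {}"
    then obtain y where y: "f y \<noteq> 0" "g (x - y) \<noteq> 0" by auto
    obtain a where a: "a \<in> C" "y = q_to_r n a" using f y by (auto simp: csupp_def)
    obtain b where b: "b \<in> C" "x - y = q_to_r n b" using g y by (auto simp: csupp_def)
    have "x = q_to_r n (a + b)" using a b by (simp add: qtr_add algebra_simps)
    then show False using x Cone_add[OF a(1) b(1)] by auto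
  qed
  show ?thesis by (simp only: lmult_def E sum.empty)
qed

lemma csupp_lmult: "csupp f \<Longrightarrow> csupp g \<Longrightarrow> csupp (lmult f g)"
  using lmult_out unfolding csupp_def by blast

lemma B_lmult:
  assumes f: "csupp f" and g: "csupp g"
  shows "B_map n (lmult f g) = pmult (B_map n f) (B_map n g)"
proof
  fix x
  let ?F = "\<lambda>a. f (q_to_r n a)" and ?G = "\<lambda>a. g (q_to_r n a)"
  let ?W = "{(a,b). a \<in> C \<and> b \<in> C \<and> rho a + rho b = x}"
  have "B_map n (lmult f g) x = (\<Sum>c\<in>Fib x. lmult f g (q_to_r n c))"
    by (rule B_cone[OF csupp_lmult[OF f g]])
  also have "\<dots> = (\<Sum>c\<in>Fib x. \<Sum>a\<in>{a\<in>C. c - a \<in> C}. ?F a * ?G (c - a))"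
    by (rule sum.cong[OF refl], rule lmult_cone[OF f g]) (auto simp: Fib_def)
  also have "\<dots> = (\<Sum>(c,a)\<in>(SIGMA c:Fib x. {a\<in>C. c - a \<in> C}). ?F a * ?G (c - a))"
    by (rule sum.Sigma) (auto simp: Fib_finite Dc_finite)
  also have "\<dots> = (\<Sum>(a,b)\<in>?W. ?F a * ?G b)"
    apply (rule sum.reindex_bij_witness[where i="\<lambda>(a,b). (a + b, a)" and j="\<lambda>(c,a). (a, c - a)"])
        apply (auto simp: Fib_def Cone_add)
    apply (metis add_diff_cancel_left' rho_add diff_add_cancel add.commute)
    apply (metis rho_add)
    done
  also have "\<dots> = (\<Sum>(p,ab)\<in>(SIGMA p:Down x. Fib p \<times> Fib (x - p)). ?F (fst ab) * ?G (snd ab))"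
    apply (rule sum.reindex_bij_witness[where i="\<lambda>(p,ab). ab" and j="\<lambda>(a,b). (rho a, (a,b))"])
        apply (auto simp: Fib_def Down_def le2_add_self le2_diff_add)
    done
  also have "\<dots> = (\<Sum>p\<in>Down x. \<Sum>ab\<in>Fib p \<times> Fib (x - p). ?F (fst ab) * ?G (snd ab))"
    by (rule sum.Sigma[symmetric]) (auto simp: finite_Down Fib_finite)
  also have "\<dots> = (\<Sum>p\<in>Down x. (\<Sum>a\<in>Fib p. ?F a) * (\<Sum>b\<in>Fib (x - p). ?G b))"
    by (simp add: sum_product sum.cartesian_product case_prod_unfold)
  also have "\<dots> = pmult (B_map n f) (B_map n g) x"
    by (simp add: pmult_eq B_cone[OF f] B_cone[OF g])
  finally show "B_map n (lmult f g) x = pmult (B_map n f) (B_map n g) x" .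
qed

lemma qtr_eq_C: "a \<in> C \<Longrightarrow> b \<in> C \<Longrightarrow> q_to_r n a = q_to_r n b \<longleftrightarrow> a = b"
  using qtr_inj_C Cone_keys' by blast

lemma sum_ind_Fib: "b \<in> C \<Longrightarrow> (\<Sum>a\<in>Fib x. if a = b then (1::'a::comm_ring_1) else 0) = (if rho b = x then 1 else 0)"
  by (simp add: Fib_finite) (auto simp: Fib_def)

lemma csupp_lone: "csupp lone"
  using Cone_zero by (auto simp: csupp_def lone_def qtr_zero intro!: image_eqI[where x=0])

lemma rho_zero: "rho 0 = 0"
  by (auto simp: rho_def negs_def zero_prod_def intro!: poly_mapping_eqI simp: lookup_posp)

lemma B_lone: "B_map n lone = pone"
proof
  fix x
  have "B_map n lone x = (\<Sum>a\<in>Fib x. if a = 0 then 1 else 0)"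
    unfolding B_cone[OF csupp_lone]
    by (rule sum.cong[OF refl]) (auto simp: lone_def Fib_def qtr_zero qtr_eq_C[OF _ Cone_zero, symmetric])
  also have "\<dots> = pone x"
    using sum_ind_Fib[OF Cone_zero, of x] by (auto simp: pone_eq rho_zero)
  finally show "B_map n lone x = pone x" .
qed

lemma lpow_cone: "csupp f \<Longrightarrow> csupp (lpow f k) \<and> B_map n (lpow f k) = ppow (B_map n f) k"
  by (induction k) (simp_all add: csupp_lone B_lone csupp_lmult B_lmult)

end

locale edge_ctx = cone_ctx +
  fixes i j :: nat
  assumes iL: "i \<in> L" and jR: "j \<in> R" and ij: "i < j"
begin

lemma i_range: "1 \<le> i" "i \<le> n" and j_range: "1 \<le> j" "j \<le> n"
  using iL jR sub by auto

lemma iR: "i \<notin> R" and jL: "j \<notin> L" using iL jR disj by auto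

definition gm :: "nat \<Rightarrow> nat \<Rightarrow>\<^sub>0 int" where
  "gm m = Poly_Mapping.single i (int m) - Poly_Mapping.single j (int m)"

lemma gm_C: "gm m \<in> C"
  using iL jR iR jL ij unfolding Cone_def gm_def by (auto simp: lookup_minus lookup_single when_def)

lemma si_C: "Poly_Mapping.single i 1 \<in> C"
  using iL iR unfolding Cone_def by (auto simp: lookup_single when_def)

lemma sj_C: "- Poly_Mapping.single j 1 \<in> C"
  using jL jR unfolding Cone_def by (auto simp: lookup_single when_def)

lemma qexp_i: "qexp n i = q_to_r n (Poly_Mapping.single i 1)"
  using i_range by (simp add: qexp_def qtr_single)

lemma qexp_j: "- qexp n j = q_to_r n (- Poly_Mapping.single j 1)"
  using j_range by (simp add: qexp_def qtr_single qtr_uminus)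

lemma qtr_gm: "q_to_r n (gm m) = (\<Sum>l\<in>{i..<j}. Poly_Mapping.single l (int m))"
proof -
  have "q_to_r n (gm m) = (\<Sum>l\<in>{i..n}. Poly_Mapping.single l (int m)) - (\<Sum>l\<in>{j..n}. Poly_Mapping.single l (int m))"
    using i_range j_range by (simp add: gm_def qtr_diff qtr_single)
  also have "\<dots> = (\<Sum>l\<in>{i..<j}. Poly_Mapping.single l (int m))"
    using ij j_range by (auto intro!: poly_mapping_eqI simp: lookup_minus lookup_sum lookup_single when_def)
  finally show ?thesis .
qed

lemma rho_si: "rho (Poly_Mapping.single i 1) = (Poly_Mapping.single i 1, 0)"
  by (auto simp: rho_def negs_def intro!: poly_mapping_eqI sum.neutral simp: lookup_posp lookup_single when_def)

lemma rho_sj: "rho (- Poly_Mapping.single j 1) = (0, 1)"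
proof -
  have "(\<Sum>l\<in>{1..n}. nat (- lk (- Poly_Mapping.single j (1::int)) l)) = (\<Sum>l\<in>{1..n}. if l = j then 1 else 0)"
    by (rule sum.cong) (auto simp: lookup_single when_def)
  also have "\<dots> = 1" using j_range by simp
  finally show ?thesis
    by (auto simp: rho_def negs_def intro!: poly_mapping_eqI simp: lookup_posp lookup_single when_def)
qed

lemma rho_gm: "rho (gm m) = (Poly_Mapping.single i m, m)"
proof -
  have "(\<Sum>l\<in>{1..n}. nat (- lk (gm m) l)) = (\<Sum>l\<in>{1..n}. if l = j then m else 0)"
    using ij by (intro sum.cong) (auto simp: gm_def lookup_minus lookup_single when_def)
  also have "\<dots> = m" using j_range by simp
  finally show ?thesis
    using ij by (auto simp: rho_def negs_def gm_def intro!: poly_mapping_eqI simp: lookup_posp lookup_single lookup_minus when_def)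
qed


definition F1 :: "'a::comm_ring_1 \<Rightarrow> 'a \<Rightarrow> 'a laurent" where
  "F1 \<beta> \<alpha> = (\<lambda>c. - (lmon (qexp n i) c + \<beta> * lone c + \<alpha> * lmon (- qexp n j) c))"

lemma csupp_F1: "csupp (F1 \<beta> \<alpha>)"
proof -
  have "qexp n i \<in> q_to_r n ` C" "0 \<in> q_to_r n ` C" "- qexp n j \<in> q_to_r n ` C"
    using si_C sj_C Cone_zero qtr_zero[of n, symmetric] unfolding qexp_i qexp_j by blast+
  then show ?thesis unfolding csupp_def F1_def lmon_def lone_def by (auto split: if_splits)
qed

lemma F1_val: "a \<in> C \<Longrightarrow> F1 \<beta> \<alpha> (q_to_r n a) = - ((if a = Poly_Mapping.single i 1 then 1 else 0)
      + \<beta> * (if a = 0 then 1 else 0) + \<alpha> * (if a = - Poly_Mapping.single j 1 then 1 else 0))"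
proof -
  assume a: "a \<in> C"
  have e1: "q_to_r n a = qexp n i \<longleftrightarrow> a = Poly_Mapping.single i 1" unfolding qexp_i using qtr_eq_C[OF a si_C] .
  have e2: "q_to_r n a = 0 \<longleftrightarrow> a = 0" using qtr_eq_C[OF a Cone_zero] by (simp add: qtr_zero)
  have e3: "q_to_r n a = - qexp n j \<longleftrightarrow> a = - Poly_Mapping.single j 1" unfolding qexp_j using qtr_eq_C[OF a sj_C] .
  show ?thesis unfolding F1_def lmon_def lone_def e1 e2 e3 by simp
qed

lemma B_F1: "B_map n (F1 \<beta> \<alpha>) = (\<lambda>(e,k). - ((if e = Poly_Mapping.single i 1 \<and> k = 0 then 1 else 0)
                        + (if e = 0 \<and> k = 0 then \<beta> else 0)
                        + (if e = 0 \<and> k = 1 then \<alpha> else 0)))"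
proof
  fix x
  have "B_map n (F1 \<beta> \<alpha>) x = (\<Sum>a\<in>Fib x. - ((if a = Poly_Mapping.single i 1 then 1 else 0)
      + \<beta> * (if a = 0 then 1 else 0) + \<alpha> * (if a = - Poly_Mapping.single j 1 then 1 else 0)))"
    unfolding B_cone[OF csupp_F1]
    by (rule sum.cong[OF refl]) (auto simp: Fib_def F1_val)
  also have "\<dots> = - ((if rho (Poly_Mapping.single i 1) = x then 1 else 0) + \<beta> * (if rho 0 = x then 1 else 0)
       + \<alpha> * (if rho (- Poly_Mapping.single j 1) = x then 1 else 0))"
    unfolding sum_negf sum.distrib sum_distrib_left[symmetric] sum_ind_Fib[OF si_C] sum_ind_Fib[OF Cone_zero]
      sum_ind_Fib[OF sj_C] by (rule refl)
  also have "\<dots> = (\<lambda>(e,k). - ((if e = Poly_Mapping.single i 1 \<and> k = 0 then 1 else 0)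
                        + (if e = 0 \<and> k = 0 then \<beta> else 0)
                        + (if e = 0 \<and> k = 1 then \<alpha> else 0))) x"
    by (cases x) (auto simp: rho_si rho_sj rho_zero zero_prod_def)
  finally show "B_map n (F1 \<beta> \<alpha>) x = (\<lambda>(e,k). - ((if e = Poly_Mapping.single i 1 \<and> k = 0 then 1 else 0)
                        + (if e = 0 \<and> k = 0 then \<beta> else 0)
                        + (if e = 0 \<and> k = 1 then \<alpha> else 0))) x" .
qed

lemma lgeom_gm: "a \<in> C \<Longrightarrow> lgeom i j (q_to_r n a) = (if \<exists>m. a = gm m then 1 else 0)"
  unfolding lgeom_def qtr_gm[symmetric] using qtr_eq_C gm_C by auto

lemma csupp_lgeom: "csupp (lgeom i j)"
  unfolding csupp_def lgeom_def qtr_gm[symmetric] using gm_C by (auto split: if_splits)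

lemma B_lgeom: "B_map n (lgeom i j) = (\<lambda>(e,k). if e = Poly_Mapping.single i k then 1 else 0)"
proof
  fix x :: "(nat \<Rightarrow>\<^sub>0 nat) \<times> nat"
  have "B_map n (lgeom i j) x = (\<Sum>a\<in>Fib x. if \<exists>m. a = gm m then 1 else 0)"
    unfolding B_cone[OF csupp_lgeom] by (rule sum.cong[OF refl]) (auto simp: Fib_def lgeom_gm)
  also have "\<dots> = (\<Sum>a\<in>{a\<in>Fib x. \<exists>m. a = gm m}. 1)"
    by (rule sum.inter_filter[symmetric, OF Fib_finite])
  finally have T: "B_map n (lgeom i j) x = (\<Sum>a\<in>{a\<in>Fib x. \<exists>m. a = gm m}. 1)" .
  have S: "{a\<in>Fib x. \<exists>m. a = gm m} = (if fst x = Poly_Mapping.single i (snd x) then {gm (snd x)} else {})"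
    by (cases x) (auto simp: Fib_def rho_gm gm_C)
  show "B_map n (lgeom i j) x = (\<lambda>(e,k). if e = Poly_Mapping.single i k then 1 else 0) x"
    unfolding T S by (cases x) auto
qed

lemma B_Ax: "B_map n (A_x n \<beta> \<alpha> i j) = E_t \<beta> \<alpha> i"
  unfolding A_x_def E_t_def F1_def[symmetric]
  by (simp add: B_lmult csupp_F1 csupp_lgeom B_F1 B_lgeom)

lemma csupp_Ax: "csupp (A_x n \<beta> \<alpha> i j)"
  unfolding A_x_def F1_def[symmetric]
  by (simp add: csupp_lmult csupp_F1 csupp_lgeom)

end




context cone_ctx
begin

lemma Ax_cone:
  assumes "i \<in> L" "j \<in> R" "i < j"
  shows "csupp (A_x n \<beta> \<alpha> i j) \<and> B_map n (A_x n \<beta> \<alpha> i j) = E_t \<beta> \<alpha> i"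
proof -
  have E: "edge_ctx n L R i j" by unfold_locales (use assms in auto)
  show ?thesis using edge_ctx.csupp_Ax[OF E] edge_ctx.B_Ax[OF E] by (rule conjI)
qed

lemma foldr_cone:
  assumes "\<forall>v\<in>set xs. fst v \<in> L \<and> snd v \<in> R \<and> fst v < snd v"
  shows "csupp (foldr (\<lambda>v acc. lmult (lpow (A_x n \<beta> \<alpha> (fst v) (snd v)) (c v)) acc) xs lone) \<and>
         B_map n (foldr (\<lambda>v acc. lmult (lpow (A_x n \<beta> \<alpha> (fst v) (snd v)) (c v)) acc) xs lone) =
         foldr (\<lambda>v acc. pmult (ppow (E_t \<beta> \<alpha> (fst v)) (c v)) acc) xs pone"
  using assms
proof (induction xs)
  case Nil
  then show ?case by (simp add: csupp_lone B_lone)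
next
  case (Cons v xs)
  then have v: "csupp (A_x n \<beta> \<alpha> (fst v) (snd v)) \<and> B_map n (A_x n \<beta> \<alpha> (fst v) (snd v)) = E_t \<beta> \<alpha> (fst v)"
    using Ax_cone by auto
  then have "csupp (lpow (A_x n \<beta> \<alpha> (fst v) (snd v)) (c v)) \<and>
     B_map n (lpow (A_x n \<beta> \<alpha> (fst v) (snd v)) (c v)) = ppow (E_t \<beta> \<alpha> (fst v)) (c v)"
    using lpow_cone by auto
  with Cons show ?case by (simp add: csupp_lmult B_lmult)
qed

end

definition D1 :: "((nat \<times> nat) \<Rightarrow>\<^sub>0 nat) \<Rightarrow> (nat \<Rightarrow>\<^sub>0 nat)" where
  "D1 m = (\<Sum>v\<in>ks m. Poly_Mapping.single (fst v) (lk m v))"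

lemma lookup_D1: "lk (D1 m) i = (\<Sum>v\<in>{v\<in>ks m. fst v = i}. lk m v)"
proof -
  have "lk (D1 m) i = (\<Sum>v\<in>ks m. if fst v = i then lk m v else 0)"
    unfolding D1_def lookup_sum lookup_single by (rule sum.cong) (auto simp: when_def)
  also have "\<dots> = (\<Sum>v\<in>{v\<in>ks m. fst v = i}. lk m v)"
    by (rule sum.inter_filter[symmetric]) simp
  finally show ?thesis .
qed

lemma keys_D1: "ks (D1 m) = fst ` ks m"
proof -
  have "i \<in> ks (D1 m) \<longleftrightarrow> i \<in> fst ` ks m" for i
  proof -
    have fin: "finite {v\<in>ks m. fst v = i}" by simp
    have "i \<in> ks (D1 m) \<longleftrightarrow> (\<Sum>v\<in>{v\<in>ks m. fst v = i}. lk m v) \<noteq> 0"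
      by (simp only: in_keys_iff lookup_D1)
    also have "\<dots> \<longleftrightarrow> (\<exists>v\<in>{v\<in>ks m. fst v = i}. lk m v \<noteq> 0)"
      using sum_eq_0_iff[OF fin, of "lk m"] by auto
    also have "\<dots> \<longleftrightarrow> (\<exists>v\<in>ks m. fst v = i)"
      by (auto simp only: in_keys_iff mem_Collect_eq)
    also have "\<dots> \<longleftrightarrow> i \<in> fst ` ks m" by force
    finally show ?thesis .
  qed
  then show ?thesis by blast
qed

lemma mono_case:
  assumes pm: "pathless_mon m" and rng: "ks m \<subseteq> {(i,j). 1 \<le> i \<and> i < j \<and> j \<le> n}"
  shows "E_mon \<beta> \<alpha> (D1 m) = B_map n (A_mon n \<beta> \<alpha> m)"
proof -
  let ?L = "fst ` ks m" and ?R = "snd ` ks m"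
  interpret cone_ctx n ?L ?R
  proof
    show "?L \<inter> ?R = {}"
    proof (rule ccontr)
      assume "?L \<inter> ?R \<noteq> {}"
      then obtain x k h where a: "(x,k) \<in> ks m" "(h,x) \<in> ks m" by force
      then have "h < x" "x < k" using rng by auto
      moreover have "lk m (h,x) > 0" "lk m (x,k) > 0" using a by (simp_all add: in_keys_iff)
      ultimately have "\<exists>i j k. i < j \<and> j < k \<and> lk m (i,j) > 0 \<and> lk m (j,k) > 0" by blast
      then show False using pm unfolding pathless_mon_def by simp
    qed
    show "?L \<union> ?R \<subseteq> {1..n}" using rng by force
  qed
  have dist: "distinct (sorted_list_of_set (ks m))" and st: "set (sorted_list_of_set (ks m)) = ks m" by simp_all
  have "B_map n (A_mon n \<beta> \<alpha> m) = foldr (\<lambda>v acc. pmult (ppow (E_t \<beta> \<alpha> (fst v)) (lk m v)) acc) (sorted_list_of_set (ks m)) pone"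
    unfolding A_mon_def
  proof (rule conjunct2[OF foldr_cone], rule ballI)
    fix v assume "v \<in> set (sorted_list_of_set (ks m))"
    then have v: "v \<in> ks m" by simp
    have "fst v < snd v" using rng v by (cases v) auto
    then show "fst v \<in> ?L \<and> snd v \<in> ?R \<and> fst v < snd v" using v by auto
  qed
  also have "\<dots> = pm.F (\<lambda>v. ppow (E_t \<beta> \<alpha> (fst v)) (lk m v)) (ks m)"
    using foldr_pm[OF dist, of "\<lambda>v. ppow (E_t \<beta> \<alpha> (fst v)) (lk m v)"] unfolding st .
  finally have B: "B_map n (A_mon n \<beta> \<alpha> m) = pm.F (\<lambda>v. ppow (E_t \<beta> \<alpha> (fst v)) (lk m v)) (ks m)" .
  have "E_mon \<beta> \<alpha> (D1 m) = pm.F (\<lambda>i. ppow (E_t \<beta> \<alpha> i) (lk (D1 m) i)) (fst ` ks m)"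
    unfolding E_mon_def keys_D1[symmetric]
    using foldr_pm[of "sorted_list_of_set (ks (D1 m))" "\<lambda>i. ppow (E_t \<beta> \<alpha> i) (lk (D1 m) i)"] by simp
  also have "\<dots> = pm.F (\<lambda>i. pm.F (\<lambda>v. ppow (E_t \<beta> \<alpha> (fst v)) (lk m v)) {v\<in>ks m. fst v = i}) (fst ` ks m)"
  proof (rule pm.cong[OF refl])
    fix i assume "i \<in> fst ` ks m"
    have "ppow (E_t \<beta> \<alpha> i) (lk (D1 m) i) = pm.F (\<lambda>v. ppow (E_t \<beta> \<alpha> i) (lk m v)) {v\<in>ks m. fst v = i}"
      unfolding lookup_D1 by (rule ppow_sum) simp
    also have "\<dots> = pm.F (\<lambda>v. ppow (E_t \<beta> \<alpha> (fst v)) (lk m v)) {v\<in>ks m. fst v = i}"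
      by (rule pm.cong) auto
    finally show "ppow (E_t \<beta> \<alpha> i) (lk (D1 m) i) = pm.F (\<lambda>v. ppow (E_t \<beta> \<alpha> (fst v)) (lk m v)) {v\<in>ks m. fst v = i}" .
  qed
  also have "\<dots> = pm.F (\<lambda>v. ppow (E_t \<beta> \<alpha> (fst v)) (lk m v)) (ks m)"
    by (rule pm.group) simp_all
  finally show ?thesis using B by simp
qed

lemma E_map_sub:
  assumes "finite S" "ks p \<subseteq> S"
  shows "E_map \<beta> \<alpha> p x = (\<Sum>e\<in>S. lk p e * E_mon \<beta> \<alpha> e x)"
  unfolding E_map_def by (rule sum.mono_neutral_left) (use assms in \<open>auto simp: in_keys_iff\<close>)

lemma E_map_sum:
  assumes "finite M"
  shows "E_map \<beta> \<alpha> (\<Sum>m\<in>M. Poly_Mapping.single (d m) (c m)) x = (\<Sum>m\<in>M. c m * E_mon \<beta> \<alpha> (d m) x)"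
proof -
  have ks: "ks (\<Sum>m\<in>M. Poly_Mapping.single (d m) (c m)) \<subseteq> d ` M"
  proof
    fix e assume e: "e \<in> ks (\<Sum>m\<in>M. Poly_Mapping.single (d m) (c m))"
    show "e \<in> d ` M"
    proof (rule ccontr)
      assume "e \<notin> d ` M"
      then have "lk (\<Sum>m\<in>M. Poly_Mapping.single (d m) (c m)) e = 0"
        by (auto simp: lookup_sum lookup_single when_def intro!: sum.neutral)
      then show False using e by (simp add: in_keys_iff)
    qed
  qed
  have "E_map \<beta> \<alpha> (\<Sum>m\<in>M. Poly_Mapping.single (d m) (c m)) x =
        (\<Sum>e\<in>d ` M. (\<Sum>m\<in>M. if d m = e then c m else 0) * E_mon \<beta> \<alpha> e x)"
    by (subst E_map_sub[OF _ ks]) (use assms in \<open>auto simp: lookup_sum lookup_single when_def intro!: sum.cong\<close>)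
  also have "\<dots> = (\<Sum>e\<in>d ` M. \<Sum>m\<in>M. if d m = e then c m * E_mon \<beta> \<alpha> e x else 0)"
    by (auto simp: sum_distrib_right intro!: sum.cong)
  also have "\<dots> = (\<Sum>m\<in>M. \<Sum>e\<in>d ` M. if d m = e then c m * E_mon \<beta> \<alpha> e x else 0)"
    by (rule sum.swap)
  also have "\<dots> = (\<Sum>m\<in>M. c m * E_mon \<beta> \<alpha> (d m) x)"
    using assms by (simp add: sum.delta)
  finally show ?thesis .
qed

lemma B_map_lin: "B_map n (\<lambda>c. \<Sum>m\<in>M. h m * g m c) x = (\<Sum>m\<in>M. h m * B_map n (g m) x)"
  by (cases x) (simp add: B_map_def sum_distrib_left, rule sum.swap)

theorem corollary3p17:
  fixes q :: "((nat \<times> nat) \<Rightarrow>\<^sub>0 nat) \<Rightarrow>\<^sub>0 'k::comm_ring_1"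
    and n :: nat and \<beta> \<alpha> :: 'k
  assumes "n \<ge> 1"
    and "\<forall>m\<in>Poly_Mapping.keys q. Poly_Mapping.keys m \<subseteq> {(i,j). 1 \<le> i \<and> i < j \<and> j \<le> n}"
    and "pathless q"
  shows "E_map \<beta> \<alpha> (D_map q) = B_map n (A_map n \<beta> \<alpha> q)"
proof
  fix x
  have "E_map \<beta> \<alpha> (D_map q) x = (\<Sum>m\<in>ks q. lk q m * E_mon \<beta> \<alpha> (D1 m) x)"
    unfolding D_map_def D1_def[symmetric] by (rule E_map_sum) simp
  also have "\<dots> = (\<Sum>m\<in>ks q. lk q m * B_map n (A_mon n \<beta> \<alpha> m) x)"
  proof (rule sum.cong[OF refl])
    fix m assume "m \<in> ks q"
    then show "lk q m * E_mon \<beta> \<alpha> (D1 m) x = lk q m * B_map n (A_mon n \<beta> \<alpha> m) x"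
      using assms(2,3) mono_case[of m n \<beta> \<alpha>] by (simp add: pathless_def)
  qed
  also have "\<dots> = B_map n (A_map n \<beta> \<alpha> q) x"
    unfolding A_map_def by (rule B_map_lin[symmetric])
  finally show "E_map \<beta> \<alpha> (D_map q) x = B_map n (A_map n \<beta> \<alpha> q) x" .
qed


end
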